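(* Let $q\ge2$ be an integer and $\eta\in(0,1-1/q]$. Suppose $\mathcal{C}\subseteq[q]^n$ is a code such that for every $c\in\mathcal{C}$ there are at most $A$ codewords $c'\in\mathcal{C}$ (including $c$ itself) with $\delta(c,c')<\eta$. Then for every integer $L\ge2$, $\mathcal{C}$ is $(J_q(\eta-\eta/L),\,AL-1)$-list decodable.
   Context: $[q]=\{0,1,\dots,q-1\}$. For $x,y\in[q]^n$, $\delta(x,y)$ is the fraction of coordinates $i$ with $x_i\ne y_i$. A code $\mathcal{C}\subseteq[q]^n$ is $(\rho,\ell)$-list decodable if for every $y\in[q]^n$ the number of $c\in\mathcal{C}$ with $\delta(c,y)<\rho$ is at most $\ell$. The Johnson radius function is $J_q(x)=\frac{q-1}{q}\Big(1-\sqrt{1-\frac{qx}{q-1}}\Big)$ for $x\in[0,1-1/q]$. *)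

theory Defs
  imports Complex_Main "HOL-Library.FuncSet"
begin

text \<open>The ambient space [q]^n: words indexed by {0..<n} with letters in {0..<q},
  represented as extensional functions.\<close>
definition words :: "nat \<Rightarrow> nat \<Rightarrow> (nat \<Rightarrow> nat) set" where
  "words q n = {..<n} \<rightarrow>\<^sub>E {..<q}"

definition rel_dist :: "nat \<Rightarrow> (nat \<Rightarrow> nat) \<Rightarrow> (nat \<Rightarrow> nat) \<Rightarrow> real" where
  "rel_dist n x y = real (card {i \<in> {..<n}. x i \<noteq> y i}) / real n"

definition johnson :: "nat \<Rightarrow> real \<Rightarrow> real" where
  "johnson q x = (real q - 1) / real q * (1 - sqrt (1 - real q * x / (real q - 1)))"

definition list_decodable ::
  "nat \<Rightarrow> nat \<Rightarrow> (nat \<Rightarrow> nat) set \<Rightarrow> real \<Rightarrow> nat \<Rightarrow> bool" where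
  "list_decodable q n C \<rho> l \<longleftrightarrow>
     (\<forall>y \<in> words q n. card {c \<in> C. rel_dist n c y < \<rho>} \<le> l)"

end

theory Submission
  imports Defs "HOL-Analysis.Convex"
begin

lemma greedy:
  fixes P :: "'a \<Rightarrow> 'a \<Rightarrow> bool"
  assumes "finite S" "\<And>x. x\<in>S \<Longrightarrow> card {y\<in>S. P x y} \<le> A" "\<And>x. P x x"
    "\<And>x y. P x y \<Longrightarrow> P y x" "card S \<ge> A*m" "A \<ge> 1"
  shows "\<exists>T\<subseteq>S. card T = m \<and> (\<forall>x\<in>T. \<forall>y\<in>T. x\<noteq>y \<longrightarrow> \<not> P x y)"
  using assms(1,2,5)
proof (induction m arbitrary: S)
  case 0
  then show ?case by (intro exI[of _ "{}"]) auto
next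
  case (Suc m)
  have "A \<le> A * Suc m" by simp
  hence "card S \<ge> 1" using Suc.prems(3) assms(6) by linarith
  then obtain x where x: "x \<in> S" by (metis card.empty ex_in_conv not_one_le_zero)
  define S' where "S' = S - {y\<in>S. P x y}"
  have fin: "finite S'" using Suc.prems(1) by (simp add: S'_def)
  have "card S' = card S - card {y\<in>S. P x y}"
    unfolding S'_def by (rule card_Diff_subset) (use Suc.prems(1) in auto)
  moreover have "card {y\<in>S. P x y} \<le> A" using Suc.prems(2) x by blast
  ultimately have cS': "card S' \<ge> A*m" using Suc.prems(3) by (simp add: algebra_simps)
  have b: "\<And>z. z\<in>S' \<Longrightarrow> card {y\<in>S'. P z y} \<le> A"
  proof -
    fix z assume "z \<in> S'"
    hence "z \<in> S" by (simp add: S'_def)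
    have "card {y\<in>S'. P z y} \<le> card {y\<in>S. P z y}"
      by (rule card_mono) (use Suc.prems(1) in \<open>auto simp: S'_def\<close>)
    thus "card {y\<in>S'. P z y} \<le> A" using Suc.prems(2)[OF \<open>z\<in>S\<close>] by linarith
  qed
  obtain T where T: "T \<subseteq> S'" "card T = m" "\<forall>u\<in>T. \<forall>v\<in>T. u\<noteq>v \<longrightarrow> \<not> P u v"
    using Suc.IH[OF fin b cS'] by blast
  have xT: "x \<notin> T" using T(1) assms(3) by (auto simp: S'_def)
  have finT: "finite T" using T(1) fin finite_subset by blast
  show ?case
  proof (intro exI[of _ "insert x T"] conjI)
    show "insert x T \<subseteq> S" using T(1) x by (auto simp: S'_def)
    show "card (insert x T) = Suc m" using xT finT T(2) by simp
    show "\<forall>u\<in>insert x T. \<forall>v\<in>insert x T. u \<noteq> v \<longrightarrow> \<not> P u v"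
      using T(1,3) assms(4) by (auto simp: S'_def)
  qed
qed


lemma percoord:
  fixes T :: "(nat \<Rightarrow> nat) set" and y :: "nat \<Rightarrow> nat"
  assumes fin: "finite T" and q: "q \<ge> 2" and Tw: "\<forall>c\<in>T. c k < q" and yk: "y k < q"
  defines "t \<equiv> (\<Sum>j\<in>T. if j k \<noteq> y k then 1 else 0 :: real)"
  shows "(\<Sum>i\<in>T. \<Sum>j\<in>T. if i k = j k then 1 else 0 :: real)
           \<ge> (real (card T) - t)^2 + t^2 / (real q - 1)"
proof -
  define cnt where "cnt a = (\<Sum>j\<in>T. if j k = a then 1 else 0 :: real)" for a
  have e1: "(if i k = j k then 1 else 0 :: real) =
      (\<Sum>a<q. (if i k = a then 1 else 0) * (if j k = a then 1 else 0))" if "i \<in> T" "j \<in> T" for i j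
  proof -
    have "(\<Sum>a<q. (if i k = a then 1 else 0) * (if j k = a then 1 else 0 :: real))
        = (\<Sum>a<q. if a = i k then (if j k = i k then 1 else 0) else 0)"
      by (rule sum.cong) auto
    also have "\<dots> = (if i k = j k then 1 else 0)" using Tw that by (simp add: eq_commute)
    finally show ?thesis by simp
  qed
  have "(\<Sum>i\<in>T. \<Sum>j\<in>T. if i k = j k then 1 else 0 :: real)
      = (\<Sum>i\<in>T. \<Sum>j\<in>T. \<Sum>a<q. (if i k = a then 1 else 0) * (if j k = a then 1 else 0))"
    using e1 by simp
  also have "\<dots> = (\<Sum>i\<in>T. \<Sum>a<q. \<Sum>j\<in>T. (if i k = a then 1 else 0) * (if j k = a then 1 else 0 :: real))"
    by (intro sum.cong refl sum.swap)
  also have "\<dots> = (\<Sum>a<q. \<Sum>i\<in>T. \<Sum>j\<in>T. (if i k = a then 1 else 0) * (if j k = a then 1 else 0))"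
    by (rule sum.swap)
  also have "\<dots> = (\<Sum>a<q. (cnt a)^2)"
    by (simp add: cnt_def power2_eq_square sum_product)
  finally have E: "(\<Sum>i\<in>T. \<Sum>j\<in>T. if i k = j k then 1 else 0 :: real) = (\<Sum>a<q. (cnt a)^2)" .
  have tot: "(\<Sum>a<q. cnt a) = real (card T)"
  proof -
    have "(\<Sum>a<q. cnt a) = (\<Sum>j\<in>T. \<Sum>a<q. if j k = a then 1 else 0 :: real)"
      unfolding cnt_def by (rule sum.swap)
    also have "\<dots> = (\<Sum>j\<in>T. 1)" using Tw by (intro sum.cong) (auto simp: eq_commute)
    finally show ?thesis by simp
  qed
  have cy: "cnt (y k) = real (card T) - t"
  proof -
    have "cnt (y k) = (\<Sum>j\<in>T. 1 - (if j k \<noteq> y k then 1 else 0 :: real))"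
      unfolding cnt_def by (intro sum.cong) auto
    thus ?thesis by (simp add: sum_subtractf t_def)
  qed
  define R where "R = {..<q} - {y k}"
  have cR: "card R = q - 1" using yk by (simp add: R_def)
  have split1: "(\<Sum>a<q. cnt a) = cnt (y k) + (\<Sum>a\<in>R. cnt a)"
    unfolding R_def using yk by (simp add: sum.remove[of "{..<q}" "y k"])
  have split2: "(\<Sum>a<q. (cnt a)^2) = (cnt (y k))^2 + (\<Sum>a\<in>R. (cnt a)^2)"
    unfolding R_def using yk by (simp add: sum.remove[of "{..<q}" "y k"])
  have sR: "(\<Sum>a\<in>R. cnt a) = t" using split1 tot cy by simp
  have CS: "t^2 \<le> (\<Sum>a\<in>R. (cnt a)^2) * (real q - 1)"
    using sum_squared_le_sum_of_squares[of cnt R] sR cR q by (simp add: of_nat_diff)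
  have qpos: "real q - 1 > 0" using q by simp
  hence "t^2 / (real q - 1) \<le> (\<Sum>a\<in>R. (cnt a)^2)" using CS by (simp add: divide_le_eq)
  thus ?thesis using E split2 cy by simp
qed

lemma johnson_facts:
  fixes q :: nat and x :: real
  assumes q: "q \<ge> 2" and x0: "0 \<le> x" and x1: "x \<le> 1 - 1 / real q"
  defines "c \<equiv> real q / (real q - 1)"
  shows "0 \<le> johnson q x" "c * johnson q x \<le> 1"
    "2 * johnson q x - c * (johnson q x)^2 = x"
proof -
  have q1: "real q - 1 > 0" using q by simp
  have qp: "real q > 0" using q by simp
  define u where "u = 1 - real q * x / (real q - 1)"
  have "real q * x \<le> real q - 1"
    using x1 qp by (simp add: field_simps)
  hence u0: "0 \<le> u" unfolding u_def using q1 by (simp add: field_simps)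
  have u1: "u \<le> 1" unfolding u_def using q1 x0 qp by simp
  define r where "r = sqrt u"
  have r0: "0 \<le> r" and r1: "r \<le> 1" and r2: "r^2 = u" using u0 u1 by (auto simp: r_def)
  have J: "johnson q x = (real q - 1) / real q * (1 - r)" by (simp add: johnson_def r_def u_def)
  show "0 \<le> johnson q x" using J r1 q1 qp by simp
  have cJ: "c * johnson q x = 1 - r" using J q1 qp by (simp add: c_def field_simps)
  show "c * johnson q x \<le> 1" using cJ r0 by simp
  have "2 * johnson q x - c * (johnson q x)^2 = johnson q x * (2 - c * johnson q x)"
    by (simp add: power2_eq_square algebra_simps)
  also have "\<dots> = (real q - 1) / real q * (1 - r^2)"
    unfolding cJ unfolding J by (simp add: power2_eq_square algebra_simps)
  also have "\<dots> = x" using r2 q1 qp by (simp add: u_def field_simps)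
  finally show "2 * johnson q x - c * (johnson q x)^2 = x" .
qed

lemma final_alg:
  fixes x c e rho :: real
  assumes "0 \<le> e" "e < rho" "c > 0" "c * rho \<le> 1" "2 * rho - c * rho^2 = x"
    "x \<le> 2 * e - c * e^2"
  shows False
proof -
  have "(2 * rho - c * rho^2) - (2 * e - c * e^2) = (rho - e) * (2 - c * (rho + e))"
    by (simp add: power2_eq_square algebra_simps)
  moreover have "c * (rho + e) < 2"
  proof -
    have "c * e < c * rho" using assms by simp
    thus ?thesis using assms(4) by (simp add: algebra_simps)
  qed
  ultimately have "(2 * rho - c * rho^2) - (2 * e - c * e^2) > 0" using assms(2) by simp
  thus False using assms(5,6) by simp
qed


lemma real_card_filter:
  "real (card {i\<in>{..<n::nat}. P i}) = (\<Sum>k<n. if P k then 1 else 0 :: real)"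
proof -
  have "(\<Sum>k<n. if P k then 1 else 0 :: real) = (\<Sum>k\<in>{i\<in>{..<n}. P i}. 1)"
    by (rule sum.inter_filter[symmetric]) simp
  thus ?thesis by simp
qed

lemma core:
  fixes T :: "(nat \<Rightarrow> nat) set" and y :: "nat \<Rightarrow> nat" and q n L :: nat and \<eta> :: real
  assumes q: "q \<ge> 2" and Tw: "T \<subseteq> words q n" and yw: "y \<in> words q n" and fin: "finite T"
    and cT: "card T = L" and L: "L \<ge> 2" and eta: "0 < \<eta>" "\<eta> \<le> 1 - 1 / real q"
    and close: "\<forall>c\<in>T. rel_dist n c y < johnson q (\<eta> - \<eta> / real L)"
    and far: "\<forall>a\<in>T. \<forall>b\<in>T. a \<noteq> b \<longrightarrow> rel_dist n a b \<ge> \<eta>"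
  shows False
proof -
  have "T \<noteq> {}" using cT L by auto
  then obtain a where a: "a \<in> T" by blast
  have "card (T - {a}) = L - 1" using a fin cT by simp
  have "T - {a} \<noteq> {}"
  proof
    assume "T - {a} = {}"
    hence "card (T - {a}) = 0" by (metis card.empty)
    with \<open>card (T - {a}) = L - 1\<close> L show False by simp
  qed
  then obtain b where b: "b \<in> T" "b \<noteq> a" by blast
  have n0: "n > 0"
  proof (rule ccontr)
    assume "\<not> n > 0"
    hence "rel_dist n a b = 0" by (simp add: rel_dist_def)
    moreover have "rel_dist n a b \<ge> \<eta>" using far[rule_format, OF a b(1)] b(2) by auto
    ultimately show False using eta by linarith
  qed
  define x where "x = \<eta> - \<eta> / real L"
  define \<rho> where "\<rho> = johnson q x"
  define c where "c = real q / (real q - 1)"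
  have Lr: "real L \<ge> 2" using L by simp
  have x0: "0 \<le> x" using eta Lr by (simp add: x_def field_simps)
  have "\<eta> / real L \<ge> 0" using eta Lr by simp
  hence x1: "x \<le> 1 - 1 / real q" using eta unfolding x_def by linarith
  have xL: "x * real L = \<eta> * (real L - 1)" using Lr by (simp add: x_def field_simps)
  note JF = johnson_facts[OF q x0 x1, folded c_def \<rho>_def]
  have cpos: "c > 0" using q by (simp add: c_def)
  define d where "d u v = real (card {i\<in>{..<n}. u i \<noteq> v i})" for u v :: "nat \<Rightarrow> nat"
  have dsum: "d u v = (\<Sum>k<n. if u k \<noteq> v k then 1 else 0)" for u v
    unfolding d_def by (rule real_card_filter)
  have nr: "real n > 0" using n0 by simp
  have close': "d u y < \<rho> * real n" if "u \<in> T" for u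
  proof -
    have "rel_dist n u y < \<rho>" using close[rule_format, OF that] unfolding \<rho>_def x_def .
    hence "d u y / real n < \<rho>" by (simp add: rel_dist_def d_def)
    thus ?thesis using nr by (simp add: pos_divide_less_eq)
  qed
  have far': "d u v \<ge> \<eta> * real n" if "u \<in> T" "v \<in> T" "u \<noteq> v" for u v
  proof -
    have "rel_dist n u v \<ge> \<eta>" using far[rule_format, OF that] .
    hence "\<eta> \<le> d u v / real n" by (simp add: rel_dist_def d_def)
    thus ?thesis using nr by (simp add: pos_le_divide_eq)
  qed
  define t where "t k = (\<Sum>j\<in>T. if j k \<noteq> y k then 1 else 0 :: real)" for k
  define E where "E k = (\<Sum>i\<in>T. \<Sum>j\<in>T. if i k = j k then 1 else 0 :: real)" for k
  have inq: "u k < q" if "u \<in> words q n" "k < n" for u k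
    using that by (auto simp: words_def PiE_def Pi_def)
  have FA: "E k \<ge> (real L - t k)^2 + (t k)^2 / (real q - 1)" if "k < n" for k
    using percoord[OF fin q, of k y] Tw yw that inq cT unfolding E_def t_def by auto
  have FB: "(\<Sum>k<n. E k) \<le> real L * (real n + (real L - 1) * (real n - \<eta> * real n))"
  proof -
    have "(\<Sum>k<n. E k) = (\<Sum>i\<in>T. \<Sum>k<n. \<Sum>j\<in>T. if i k = j k then 1 else 0 :: real)"
      unfolding E_def by (rule sum.swap)
    also have "\<dots> = (\<Sum>i\<in>T. \<Sum>j\<in>T. \<Sum>k<n. if i k = j k then 1 else 0 :: real)"
      by (intro sum.cong refl sum.swap)
    also have "\<dots> = (\<Sum>i\<in>T. \<Sum>j\<in>T. real n - d i j)"
    proof (intro sum.cong refl)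
      fix i j :: "nat \<Rightarrow> nat"
      have "(\<Sum>k<n. if i k = j k then 1 else 0 :: real) = (\<Sum>k<n. 1 - (if i k \<noteq> j k then 1 else 0))"
        by (intro sum.cong) auto
      thus "(\<Sum>k<n. if i k = j k then 1 else 0 :: real) = real n - d i j"
        by (simp add: sum_subtractf dsum)
    qed
    also have "\<dots> \<le> (\<Sum>i\<in>T. real n + (real L - 1) * (real n - \<eta> * real n))"
    proof (rule sum_mono)
      fix i assume i: "i \<in> T"
      have "(\<Sum>j\<in>T. real n - d i j) = (real n - d i i) + (\<Sum>j\<in>T - {i}. real n - d i j)"
        using fin i by (simp add: sum.remove)
      also have "d i i = 0" by (simp add: d_def)
      also have "(\<Sum>j\<in>T - {i}. real n - d i j) \<le> (\<Sum>j\<in>T - {i}. real n - \<eta> * real n)"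
        by (rule sum_mono) (use far' i in auto)
      also have "\<dots> = (real L - 1) * (real n - \<eta> * real n)"
        using fin i cT L by (simp add: of_nat_diff)
      finally show "(\<Sum>j\<in>T. real n - d i j) \<le> real n + (real L - 1) * (real n - \<eta> * real n)"
        by simp
    qed
    also have "\<dots> = real L * (real n + (real L - 1) * (real n - \<eta> * real n))"
      using cT by simp
    finally show ?thesis .
  qed
  define s where "s = (\<Sum>k<n. t k)"
  define U where "U = (\<Sum>k<n. (t k)^2)"
  have FC: "s < real L * \<rho> * real n"
  proof -
    have "s = (\<Sum>j\<in>T. \<Sum>k<n. if j k \<noteq> y k then 1 else 0 :: real)"
      unfolding s_def t_def by (rule sum.swap)
    also have "\<dots> = (\<Sum>j\<in>T. d j y)" by (simp add: dsum)
    also have "\<dots> < (\<Sum>j\<in>T. \<rho> * real n)"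
      by (rule sum_strict_mono[OF fin \<open>T \<noteq> {}\<close>]) (rule close')
    also have "\<dots> = real L * \<rho> * real n" using cT by simp
    finally show ?thesis .
  qed
  have s0: "s \<ge> 0" unfolding s_def t_def by (intro sum_nonneg) auto
  have FD: "s^2 \<le> U * real n"
    using sum_squared_le_sum_of_squares[of t "{..<n}"] by (simp add: s_def U_def)
  have q1: "real q - 1 > 0" using q by simp
  have pw: "(real L - t k)^2 + (t k)^2 / (real q - 1) = (real L)^2 - 2 * real L * t k + c * (t k)^2" for k
    using q1 by (simp add: c_def field_simps power2_eq_square)
  have FF: "(\<Sum>k<n. (real L - t k)^2 + (t k)^2 / (real q - 1)) = real n * (real L)^2 - 2 * real L * s + c * U"
    by (simp only: pw) (simp add: sum.distrib sum_subtractf sum_distrib_left s_def U_def)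
  have "(\<Sum>k<n. (real L - t k)^2 + (t k)^2 / (real q - 1)) \<le> (\<Sum>k<n. E k)"
    by (rule sum_mono) (use FA in auto)
  hence G1: "real n * (real L)^2 - 2 * real L * s + c * U \<le> real L * (real n + (real L - 1) * (real n - \<eta> * real n))"
    using FF FB by simp
  have G2: "c * s^2 \<le> c * U * real n" using FD cpos by (simp add: mult_left_mono mult.assoc)
  define M where "M = real L * real n"
  have Mp: "M > 0" using nr Lr by (simp add: M_def)
  define e where "e = s / M"
  have se: "s = e * M" using Mp by (simp add: e_def)
  have e0: "0 \<le> e" using s0 Mp by (simp add: e_def)
  have e1: "e < \<rho>" using FC Mp by (simp add: e_def M_def divide_less_eq mult.commute mult.left_commute)
  have G3: "real L * (real L - 1) * \<eta> * real n * real n \<le> 2 * real L * s * real n - c * s^2"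
  proof -
    have "real L * (real L - 1) * \<eta> * real n \<le> 2 * real L * s - c * U"
      using G1 by (simp add: algebra_simps power2_eq_square)
    hence "real L * (real L - 1) * \<eta> * real n * real n \<le> (2 * real L * s - c * U) * real n"
      using nr by (simp add: mult_right_mono)
    thus ?thesis using G2 by (simp add: algebra_simps)
  qed
  have "x * M * M \<le> (2 * e - c * e^2) * M * M"
  proof -
    have "x * M * M = (x * real L) * (real L * real n * real n)" by (simp add: M_def algebra_simps)
    also have "\<dots> = real L * (real L - 1) * \<eta> * real n * real n"
      unfolding xL by (simp add: algebra_simps)
    also have "\<dots> \<le> 2 * real L * s * real n - c * s^2" by (rule G3)
    also have "\<dots> = (2 * e - c * e^2) * M * M"
      by (simp add: se M_def power2_eq_square algebra_simps)
    finally show ?thesis .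
  qed
  hence "x \<le> 2 * e - c * e^2" using Mp by simp
  thus False using final_alg[OF e0 e1 cpos JF(2) JF(3)] by simp
qed


theorem lemma2p5:
  fixes q n A L :: nat and \<eta> :: real and C :: "(nat \<Rightarrow> nat) set"
  assumes "q \<ge> 2"
    and "0 < \<eta>" and "\<eta> \<le> 1 - 1 / real q"
    and "C \<subseteq> words q n"
    and "\<forall>c \<in> C. card {c' \<in> C. rel_dist n c c' < \<eta>} \<le> A"
    and "L \<ge> 2"
  shows "list_decodable q n C (johnson q (\<eta> - \<eta> / real L)) (A * L - 1)"
proof -
  define \<rho> where "\<rho> = johnson q (\<eta> - \<eta> / real L)"
  have fw: "finite (words q n)" by (simp add: words_def finite_PiE)
  have finC: "finite C" using assms(4) fw finite_subset by blast
  have sym: "rel_dist n u v = rel_dist n v u" for u v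
  proof -
    have "{i\<in>{..<n}. u i \<noteq> v i} = {i\<in>{..<n}. v i \<noteq> u i}" by auto
    thus ?thesis by (simp add: rel_dist_def)
  qed
  have self: "rel_dist n u u = 0" for u by (simp add: rel_dist_def)
  show ?thesis unfolding list_decodable_def \<rho>_def[symmetric]
  proof
    fix y assume y: "y \<in> words q n"
    define S where "S = {c\<in>C. rel_dist n c y < \<rho>}"
    have SC: "S \<subseteq> C" by (auto simp: S_def)
    have finS: "finite S" using finC SC finite_subset by blast
    show "card {c\<in>C. rel_dist n c y < \<rho>} \<le> A * L - 1"
      unfolding S_def[symmetric]
    proof (rule ccontr)
      assume "\<not> card S \<le> A * L - 1"
      hence big: "card S \<ge> A * L" and pos: "card S > 0" by auto
      then obtain c0 where c0: "c0 \<in> S" by (metis card.empty ex_in_conv less_irrefl)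
      have "card {c'\<in>C. rel_dist n c0 c' < \<eta>} \<le> A" using assms(5) c0 SC by blast
      moreover have "card {c'\<in>C. rel_dist n c0 c' < \<eta>} \<ge> 1"
      proof -
        have "c0 \<in> {c'\<in>C. rel_dist n c0 c' < \<eta>}" using c0 SC self assms(2) by auto
        hence "{c'\<in>C. rel_dist n c0 c' < \<eta>} \<noteq> {}" by blast
        moreover have "finite {c'\<in>C. rel_dist n c0 c' < \<eta>}" using finC by simp
        ultimately show ?thesis by (simp add: Suc_le_eq card_gt_0_iff)
      qed
      ultimately have A1: "A \<ge> 1" by linarith
      have bnd: "card {z\<in>S. rel_dist n u z < \<eta>} \<le> A" if "u \<in> S" for u
      proof -
        have "card {z\<in>S. rel_dist n u z < \<eta>} \<le> card {c'\<in>C. rel_dist n u c' < \<eta>}"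
          by (rule card_mono) (use finC SC in auto)
        also have "\<dots> \<le> A" using assms(5) that SC by blast
        finally show ?thesis .
      qed
      obtain T where T: "T \<subseteq> S" "card T = L"
          "\<forall>u\<in>T. \<forall>v\<in>T. u \<noteq> v \<longrightarrow> \<not> rel_dist n u v < \<eta>"
        using greedy[of S "\<lambda>u v. rel_dist n u v < \<eta>" A L, OF finS bnd _ _ big A1]
          self sym assms(2) by auto
      show False
      proof (rule core[OF assms(1) _ y _ T(2) assms(6) assms(2) assms(3)])
        show "T \<subseteq> words q n" using T(1) SC assms(4) by blast
        show "finite T" using T(1) finS finite_subset by blast
        show "\<forall>c\<in>T. rel_dist n c y < johnson q (\<eta> - \<eta> / real L)"
          using T(1) by (auto simp: S_def \<rho>_def)
        show "\<forall>a\<in>T. \<forall>b\<in>T. a \<noteq> b \<longrightarrow> rel_dist n a b \<ge> \<eta>"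
          using T(3) by (meson not_less)
      qed
    qed
  qed
qed

end
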